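(* Let $n\ge 1$ and consider a (categorical) extended linear classifier with features $e_1,\ldots,e_n$, where $e_j\in\{1,\ldots,d_j\}$, real weights $w_0$ and $v_j^r$ ($1\le j\le n$, $1\le r\le d_j$), score $\nu(\mathbf e)=w_0+\sum_{j=1}^n v_j^{e_j}$ and decision $\tau(\mathbf e)=\oplus$ iff $\nu(\mathbf e)>0$. Let $\mathbf a=(a_1,\ldots,a_n)$ be an instance with $\nu(\mathbf a)>0$, and define $\delta_j$ and $\Phi$ as in the context. Let $\langle l_1,\ldots,l_n\rangle$ be an ordering of $\{1,\ldots,n\}$ such that $\delta_{l_1}\ge\delta_{l_2}\ge\cdots\ge\delta_{l_n}$. Then there exists a (unique) $k\in\{0,\ldots,n\}$ with $\sum_{r=1}^{k}\delta_{l_r}>\Phi$ and $\sum_{r=1}^{k-1}\delta_{l_r}\le\Phi$ (where for $k=0$ the second condition is vacuous), and for $\mathcal P=\{l_1,\ldots,l_k\}$: (i) for every $\mathbf e$ in the feature space, if $e_j=a_j$ for all $j\in\mathcal P$ then $\nu(\mathbf e)>0$; and (ii) $\mathcal P$ is an optimal solution of the problem: minimize $\sum_{i=1}^n p_i$ subject to $\sum_{i=1}^n\delta_i p_i>\Phi$, $p_i\in\{0,1\}$ (identifying $\mathcal P$ with $p_i=1$ iff $i\in\mathcal P$). In particular $\mathcal P$ is a PI-explanation of minimum cardinality.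
   Context: Feature space: $\mathbb E=\prod_{j=1}^n\{1,\ldots,d_j\}$. For the instance $\mathbf a$, define $v_j^{\omega}=\min_{1\le r\le d_j}v_j^r$, $\delta_j=v_j^{a_j}-v_j^{\omega}\ (\ge 0)$, $\Gamma=\nu(\mathbf a)=w_0+\sum_j v_j^{a_j}$, and $\Phi=\sum_{j=1}^n\delta_j-\Gamma$ (so $-\Phi=w_0+\sum_j v_j^{\omega}$ is the worst-case score). A PI-explanation of the prediction $\tau(\mathbf a)=\oplus$ is a subset-minimal set $\mathcal P\subseteq\{1,\ldots,n\}$ such that for all $\mathbf e\in\mathbb E$, $\bigwedge_{j\in\mathcal P}(e_j=a_j)$ implies $\tau(\mathbf e)=\oplus$. *)

theory Defs
  imports Complex_Main "HOL-Library.FuncSet"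
begin

definition feature_space :: "nat \<Rightarrow> (nat \<Rightarrow> nat) \<Rightarrow> (nat \<Rightarrow> nat) set" where
  "feature_space n d = PiE {1..n} (\<lambda>j. {1..d j})"

definition score :: "nat \<Rightarrow> real \<Rightarrow> (nat \<Rightarrow> nat \<Rightarrow> real) \<Rightarrow> (nat \<Rightarrow> nat) \<Rightarrow> real" where
  "score n w0 v e = w0 + (\<Sum>j=1..n. v j (e j))"

definition v_omega :: "(nat \<Rightarrow> nat) \<Rightarrow> (nat \<Rightarrow> nat \<Rightarrow> real) \<Rightarrow> nat \<Rightarrow> real" where
  "v_omega d v j = Min ((v j) ` {1..d j})"

definition delta :: "(nat \<Rightarrow> nat) \<Rightarrow> (nat \<Rightarrow> nat \<Rightarrow> real) \<Rightarrow> (nat \<Rightarrow> nat) \<Rightarrow> nat \<Rightarrow> real" where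
  "delta d v a j = v j (a j) - v_omega d v j"

definition Phi :: "nat \<Rightarrow> (nat \<Rightarrow> nat) \<Rightarrow> real \<Rightarrow> (nat \<Rightarrow> nat \<Rightarrow> real) \<Rightarrow> (nat \<Rightarrow> nat) \<Rightarrow> real" where
  "Phi n d w0 v a = (\<Sum>j=1..n. delta d v a j) - score n w0 v a"

definition sufficient ::
  "nat \<Rightarrow> (nat \<Rightarrow> nat) \<Rightarrow> real \<Rightarrow> (nat \<Rightarrow> nat \<Rightarrow> real) \<Rightarrow> (nat \<Rightarrow> nat) \<Rightarrow> nat set \<Rightarrow> bool" where
  "sufficient n d w0 v a P \<longleftrightarrow>
     (\<forall>e\<in>feature_space n d. (\<forall>j\<in>P. e j = a j) \<longrightarrow> score n w0 v e > 0)"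

definition PI_explanation ::
  "nat \<Rightarrow> (nat \<Rightarrow> nat) \<Rightarrow> real \<Rightarrow> (nat \<Rightarrow> nat \<Rightarrow> real) \<Rightarrow> (nat \<Rightarrow> nat) \<Rightarrow> nat set \<Rightarrow> bool" where
  "PI_explanation n d w0 v a P \<longleftrightarrow>
     P \<subseteq> {1..n} \<and> sufficient n d w0 v a P \<and>
     (\<forall>Q. Q \<subset> P \<longrightarrow> \<not> sufficient n d w0 v a Q)"

end

theory Submission
  imports Defs
begin

lemma antitone_sum:
  fixes g :: "nat \<Rightarrow> real"
  assumes mono: "\<forall>r\<in>{1..n}. \<forall>s\<in>{1..n}. r \<le> s \<longrightarrow> g s \<le> g r"
    and R: "R \<subseteq> {1..n}"
  shows "sum g R \<le> (\<Sum>r=1..card R. g r)"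
proof (cases "card R = 0")
  case True
  have "finite R" using R finite_subset by blast
  then have "R = {}" using True by simp
  then show ?thesis by simp
next
  case False
  define m where "m = card R"
  have fR: "finite R" using R finite_subset by blast
  have m1: "m \<ge> 1" using False m_def by simp
  have mn: "m \<le> n" using card_mono[OF _ R] m_def by simp
  define A where "A = R - {1..m}"
  define B where "B = {1..m} - R"
  define C where "C = R \<inter> {1..m}"
  have cR: "card R = card C + card A" unfolding A_def C_def
    using fR by (metis Diff_Diff_Int card_Diff_subset_Int card_Int_Diff finite_Int inf.commute)
  have cm: "m = card C + card B" unfolding B_def C_def
    by (metis Int_commute card_Int_Diff card_atLeastAtMost diff_Suc_1 finite_atLeastAtMost)
  have cAB: "card A = card B" using cR cm m_def by simp
  have sR: "sum g R = sum g C + sum g A" unfolding A_def C_def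
    using fR by (metis sum.Int_Diff)
  have sm: "sum g {1..m} = sum g C + sum g B" unfolding B_def C_def
    by (metis Int_commute finite_atLeastAtMost sum.Int_Diff)
  have "sum g A \<le> (\<Sum>x\<in>A. g m)"
  proof (rule sum_mono)
    fix x assume "x \<in> A"
    then have "x \<in> {1..n}" "m < x" using R A_def by auto
    then show "g x \<le> g m" using mono m1 mn by auto
  qed
  moreover have "(\<Sum>x\<in>B. g m) \<le> sum g B"
  proof (rule sum_mono)
    fix x assume "x \<in> B"
    then have "x \<in> {1..n}" "x \<le> m" using mn B_def by auto
    then show "g m \<le> g x" using mono m1 mn by auto
  qed
  ultimately have "sum g A \<le> sum g B" using cAB by simp
  then show ?thesis using sR sm m_def by simp
qed

lemma top_sum:
  fixes f :: "nat \<Rightarrow> real"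
  assumes l: "bij_betw l {1..n} {1..n}"
    and mono: "\<forall>r\<in>{1..n}. \<forall>s\<in>{1..n}. r \<le> s \<longrightarrow> f (l s) \<le> f (l r)"
    and Q: "Q \<subseteq> {1..n}"
  shows "sum f Q \<le> (\<Sum>r=1..card Q. f (l r))"
proof -
  define R where "R = {r\<in>{1..n}. l r \<in> Q}"
  have inj: "inj_on l R" using l unfolding R_def bij_betw_def by (auto intro: inj_on_subset)
  have img: "l ` R = Q"
  proof
    show "l ` R \<subseteq> Q" unfolding R_def by auto
    show "Q \<subseteq> l ` R"
    proof
      fix x assume x: "x \<in> Q"
      then have "x \<in> l ` {1..n}" using l Q unfolding bij_betw_def by auto
      then obtain r where "r \<in> {1..n}" "x = l r" by auto
      then show "x \<in> l ` R" unfolding R_def using x by auto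
    qed
  qed
  have "sum f Q = sum (f \<circ> l) R" using sum.reindex[OF inj, of f] img by simp
  moreover have "card R = card Q" using card_image[OF inj] img by simp
  moreover have "sum (f \<circ> l) R \<le> (\<Sum>r=1..card R. (f \<circ> l) r)"
    by (rule antitone_sum) (use mono R_def in auto)
  ultimately show ?thesis by simp
qed


theorem proposition1:
  fixes n :: nat and d :: "nat \<Rightarrow> nat" and w0 :: real and v :: "nat \<Rightarrow> nat \<Rightarrow> real"
    and a :: "nat \<Rightarrow> nat" and l :: "nat \<Rightarrow> nat"
  assumes n: "n \<ge> 1"
    and d: "\<forall>j\<in>{1..n}. d j \<ge> 1"
    and a: "a \<in> feature_space n d"
    and pos: "score n w0 v a > 0"
    and l_bij: "bij_betw l {1..n} {1..n}"
    and l_sorted: "\<forall>r\<in>{1..n}. \<forall>s\<in>{1..n}. r \<le> s \<longrightarrow> delta d v a (l r) \<ge> delta d v a (l s)"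
  shows "\<exists>k. k \<le> n
     \<and> (\<Sum>r=1..k. delta d v a (l r)) > Phi n d w0 v a
     \<and> (k \<ge> 1 \<longrightarrow> (\<Sum>r=1..k-1. delta d v a (l r)) \<le> Phi n d w0 v a)
     \<and> (\<forall>k'. k' \<le> n \<and> (\<Sum>r=1..k'. delta d v a (l r)) > Phi n d w0 v a
            \<and> (k' \<ge> 1 \<longrightarrow> (\<Sum>r=1..k'-1. delta d v a (l r)) \<le> Phi n d w0 v a) \<longrightarrow> k' = k)
     \<and> (let P = l ` {1..k} in
          (\<forall>e\<in>feature_space n d. (\<forall>j\<in>P. e j = a j) \<longrightarrow> score n w0 v e > 0)
        \<and> (\<Sum>i=1..n. delta d v a i * (if i \<in> P then 1 else 0)) > Phi n d w0 v a
        \<and> (\<forall>p :: nat \<Rightarrow> real. (\<forall>i\<in>{1..n}. p i \<in> {0, 1})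
              \<and> (\<Sum>i=1..n. delta d v a i * p i) > Phi n d w0 v a
              \<longrightarrow> (\<Sum>i=1..n. (if i \<in> P then 1 else 0)) \<le> (\<Sum>i=1..n. p i))
        \<and> PI_explanation n d w0 v a P
        \<and> (\<forall>Q. PI_explanation n d w0 v a Q \<longrightarrow> card P \<le> card Q))"
proof -
  define \<delta> where "\<delta> = delta d v a"
  define vo where "vo = v_omega d v"
  define Ph where "Ph = Phi n d w0 v a"
  define S where "S = (\<lambda>k. \<Sum>r=1..k. \<delta> (l r))"
  have aj: "\<And>j. j \<in> {1..n} \<Longrightarrow> a j \<in> {1..d j}" using a unfolding feature_space_def by auto
  have vo_le: "\<And>j r. j \<in> {1..n} \<Longrightarrow> r \<in> {1..d j} \<Longrightarrow> vo j \<le> v j r"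
    unfolding vo_def v_omega_def by (rule Min_le) auto
  have vo_in: "\<And>j. j \<in> {1..n} \<Longrightarrow> \<exists>r\<in>{1..d j}. v j r = vo j"
  proof -
    fix j assume j: "j \<in> {1..n}"
    then have "d j \<ge> 1" using d by auto
    then have "vo j \<in> (v j) ` {1..d j}" unfolding vo_def v_omega_def by (intro Min_in) auto
    then show "\<exists>r\<in>{1..d j}. v j r = vo j" by auto
  qed
  have dnn: "\<And>j. j \<in> {1..n} \<Longrightarrow> \<delta> j \<ge> 0"
    using vo_le aj unfolding \<delta>_def delta_def vo_def by force
  have lin: "\<And>r. r \<in> {1..n} \<Longrightarrow> l r \<in> {1..n}" using l_bij unfolding bij_betw_def by auto
  have negPhi: "- Ph = w0 + (\<Sum>j=1..n. vo j)"
    unfolding Ph_def Phi_def score_def \<delta>_def delta_def vo_def by (simp add: sum_subtractf)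
  have lower: "\<And>Q e. Q \<subseteq> {1..n} \<Longrightarrow> e \<in> feature_space n d \<Longrightarrow> (\<forall>j\<in>Q. e j = a j)
      \<Longrightarrow> score n w0 v e \<ge> - Ph + sum \<delta> Q"
  proof -
    fix Q e assume Q: "Q \<subseteq> {1..n}" and e: "e \<in> feature_space n d" and eq: "\<forall>j\<in>Q. e j = a j"
    have "(\<Sum>j=1..n. vo j + (if j \<in> Q then \<delta> j else 0)) \<le> (\<Sum>j=1..n. v j (e j))"
    proof (rule sum_mono)
      fix j assume j: "j \<in> {1..n}"
      show "vo j + (if j \<in> Q then \<delta> j else 0) \<le> v j (e j)"
      proof (cases "j \<in> Q")
        case True then show ?thesis using eq unfolding \<delta>_def delta_def vo_def by simp
      next
        case False
        have "e j \<in> {1..d j}" using e j unfolding feature_space_def by auto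
        then show ?thesis using False vo_le j by simp
      qed
    qed
    moreover have "(\<Sum>j=1..n. (if j \<in> Q then \<delta> j else 0)) = sum \<delta> Q"
      using Q by (simp add: sum.If_cases Int_absorb1)
    ultimately show "score n w0 v e \<ge> - Ph + sum \<delta> Q"
      unfolding score_def negPhi by (simp add: sum.distrib)
  qed
  have worst: "\<And>Q. Q \<subseteq> {1..n} \<Longrightarrow> \<exists>e\<in>feature_space n d. (\<forall>j\<in>Q. e j = a j)
      \<and> score n w0 v e = - Ph + sum \<delta> Q"
  proof -
    fix Q assume Q: "Q \<subseteq> {1..n}"
    define m where "m = (\<lambda>j. SOME r. r \<in> {1..d j} \<and> v j r = vo j)"
    have m: "\<And>j. j \<in> {1..n} \<Longrightarrow> m j \<in> {1..d j} \<and> v j (m j) = vo j"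
      unfolding m_def using vo_in by (metis (mono_tags, lifting) someI_ex)
    define e where "e = (\<lambda>j. if j \<in> {1..n} then (if j \<in> Q then a j else m j) else undefined)"
    have ef: "e \<in> feature_space n d" unfolding feature_space_def e_def
      using aj m by (simp add: PiE_def extensional_def Pi_def)
    have eq: "\<forall>j\<in>Q. e j = a j" using Q unfolding e_def by auto
    have "(\<Sum>j=1..n. v j (e j)) = (\<Sum>j=1..n. vo j + (if j \<in> Q then \<delta> j else 0))"
      by (rule sum.cong) (auto simp: e_def m \<delta>_def delta_def vo_def)
    moreover have "(\<Sum>j=1..n. (if j \<in> Q then \<delta> j else 0)) = sum \<delta> Q"
      using Q by (simp add: sum.If_cases Int_absorb1)
    ultimately have "score n w0 v e = - Ph + sum \<delta> Q"
      unfolding score_def negPhi by (simp add: sum.distrib)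
    then show "\<exists>e\<in>feature_space n d. (\<forall>j\<in>Q. e j = a j) \<and> score n w0 v e = - Ph + sum \<delta> Q"
      using ef eq by blast
  qed
  have Smono: "\<And>k k'. k \<le> k' \<Longrightarrow> k' \<le> n \<Longrightarrow> S k \<le> S k'"
    unfolding S_def by (rule sum_mono2) (auto intro!: dnn lin)
  have topQ: "\<And>Q. Q \<subseteq> {1..n} \<Longrightarrow> sum \<delta> Q \<le> S (card Q)"
    unfolding S_def by (rule top_sum[OF l_bij]) (use l_sorted \<delta>_def in auto)
  have Sn: "S n = sum \<delta> {1..n}"
    unfolding S_def using sum.reindex_bij_betw[OF l_bij, of \<delta>] by simp
  have PhSn: "Ph < S n" using pos unfolding Sn Ph_def Phi_def \<delta>_def by simp
  define k where "k = (LEAST k. Ph < S k)"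
  have Sk: "Ph < S k" unfolding k_def using PhSn by (rule LeastI)
  have kn: "k \<le> n" unfolding k_def using PhSn by (rule Least_le)
  have Skm: "k \<ge> 1 \<longrightarrow> S (k - 1) \<le> Ph"
  proof
    assume "k \<ge> 1"
    then have "k - 1 < k" by simp
    then have "\<not> Ph < S (k - 1)" unfolding k_def by (rule not_less_Least)
    then show "S (k - 1) \<le> Ph" by simp
  qed
  have uniq: "\<forall>k'. k' \<le> n \<and> Ph < S k' \<and> (k' \<ge> 1 \<longrightarrow> S (k'-1) \<le> Ph) \<longrightarrow> k' = k"
  proof (intro allI impI)
    fix k' assume h: "k' \<le> n \<and> Ph < S k' \<and> (k' \<ge> 1 \<longrightarrow> S (k'-1) \<le> Ph)"
    have "k \<le> k'" unfolding k_def using h by (intro Least_le) simp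
    moreover have "\<not> k < k'"
    proof
      assume "k < k'"
      then have "S k \<le> S (k' - 1)" using h by (intro Smono) auto
      then show False using h Sk \<open>k < k'\<close> by auto
    qed
    ultimately show "k' = k" by simp
  qed
  have small: "\<And>Q. Q \<subseteq> {1..n} \<Longrightarrow> card Q < k \<Longrightarrow> sum \<delta> Q \<le> Ph"
  proof -
    fix Q assume Q: "Q \<subseteq> {1..n}" and c: "card Q < k"
    have "sum \<delta> Q \<le> S (card Q)" using topQ Q by simp
    also have "\<dots> \<le> S (k - 1)" using c kn by (intro Smono) auto
    also have "\<dots> \<le> Ph" using Skm c by simp
    finally show "sum \<delta> Q \<le> Ph" .
  qed
  define P where "P = l ` {1..k}"
  have injk: "inj_on l {1..k}" using l_bij kn unfolding bij_betw_def
    by (auto intro: inj_on_subset)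
  have Psub: "P \<subseteq> {1..n}" unfolding P_def using lin kn by auto
  have cP: "card P = k" unfolding P_def using card_image[OF injk] by simp
  have sP: "sum \<delta> P = S k" unfolding P_def S_def using sum.reindex[OF injk, of \<delta>] by simp
  have suff: "sufficient n d w0 v a P"
    unfolding sufficient_def
  proof (intro ballI impI)
    fix e assume "e \<in> feature_space n d" "\<forall>j\<in>P. e j = a j"
    then have "score n w0 v e \<ge> - Ph + sum \<delta> P" using lower Psub by blast
    then show "score n w0 v e > 0" using sP Sk by simp
  qed
  have notsuff: "\<And>Q. Q \<subseteq> {1..n} \<Longrightarrow> card Q < k \<Longrightarrow> \<not> sufficient n d w0 v a Q"
  proof
    fix Q assume Q: "Q \<subseteq> {1..n}" and c: "card Q < k" and s: "sufficient n d w0 v a Q"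
    obtain e where "e\<in>feature_space n d" "\<forall>j\<in>Q. e j = a j" "score n w0 v e = - Ph + sum \<delta> Q"
      using worst[OF Q] by blast
    then show False using s small[OF Q c] unfolding sufficient_def by force
  qed
  have sumInd: "\<And>Q. Q \<subseteq> {1..n} \<Longrightarrow> (\<Sum>i=1..n. (if i \<in> Q then 1 else 0 :: real)) = real (card Q)"
    by (simp add: sum.If_cases Int_absorb1)
  have c1: "(\<Sum>i=1..n. \<delta> i * (if i \<in> P then 1 else 0)) > Ph"
  proof -
    have "(\<Sum>i=1..n. \<delta> i * (if i \<in> P then 1 else 0)) = (\<Sum>i=1..n. (if i \<in> P then \<delta> i else 0))"
      by (rule sum.cong) auto
    also have "\<dots> = sum \<delta> P" using Psub by (simp add: sum.If_cases Int_absorb1)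
    finally show ?thesis using sP Sk by simp
  qed
  have c2: "\<forall>p :: nat \<Rightarrow> real. (\<forall>i\<in>{1..n}. p i \<in> {0, 1})
              \<and> (\<Sum>i=1..n. \<delta> i * p i) > Ph
              \<longrightarrow> (\<Sum>i=1..n. (if i \<in> P then 1 else 0)) \<le> (\<Sum>i=1..n. p i)"
  proof (intro allI impI)
    fix p :: "nat \<Rightarrow> real" assume h: "(\<forall>i\<in>{1..n}. p i \<in> {0, 1}) \<and> (\<Sum>i=1..n. \<delta> i * p i) > Ph"
    define Q where "Q = {i\<in>{1..n}. p i = 1}"
    have Q: "Q \<subseteq> {1..n}" unfolding Q_def by auto
    have "(\<Sum>i=1..n. \<delta> i * p i) = (\<Sum>i=1..n. (if i \<in> Q then \<delta> i else 0))"
      by (rule sum.cong) (use h in \<open>auto simp: Q_def\<close>)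
    also have "\<dots> = sum \<delta> Q" using Q by (simp add: sum.If_cases Int_absorb1)
    finally have "sum \<delta> Q > Ph" using h by simp
    then have "\<not> card Q < k" using small[OF Q] by force
    moreover have "(\<Sum>i=1..n. p i) = (\<Sum>i=1..n. (if i \<in> Q then 1 else 0 :: real))"
      by (rule sum.cong) (use h in \<open>auto simp: Q_def\<close>)
    ultimately show "(\<Sum>i=1..n. (if i \<in> P then 1 else 0)) \<le> (\<Sum>i=1..n. p i)"
      using sumInd[OF Q] sumInd[OF Psub] cP by simp
  qed
  have PI: "PI_explanation n d w0 v a P"
    unfolding PI_explanation_def
  proof (intro conjI allI impI)
    show "P \<subseteq> {1..n}" by (rule Psub)
    show "sufficient n d w0 v a P" by (rule suff)
    fix Q assume "Q \<subset> P"
    then have "Q \<subseteq> {1..n}" "card Q < k" using Psub cP psubset_card_mono[of P Q] finite_subset[OF Psub] by auto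
    then show "\<not> sufficient n d w0 v a Q" by (rule notsuff)
  qed
  have mincard: "\<forall>Q. PI_explanation n d w0 v a Q \<longrightarrow> card P \<le> card Q"
  proof (intro allI impI)
    fix Q assume "PI_explanation n d w0 v a Q"
    then have "Q \<subseteq> {1..n}" "sufficient n d w0 v a Q" unfolding PI_explanation_def by auto
    then have "\<not> card Q < k" using notsuff by blast
    then show "card P \<le> card Q" using cP by simp
  qed
  have suff': "\<forall>e\<in>feature_space n d. (\<forall>j\<in>P. e j = a j) \<longrightarrow> score n w0 v e > 0"
    using suff unfolding sufficient_def .
  have "k \<le> n \<and> Ph < S k \<and> (k \<ge> 1 \<longrightarrow> S (k - 1) \<le> Ph)
     \<and> (\<forall>k'. k' \<le> n \<and> Ph < S k' \<and> (k' \<ge> 1 \<longrightarrow> S (k'-1) \<le> Ph) \<longrightarrow> k' = k)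
     \<and> (let P = P in
          (\<forall>e\<in>feature_space n d. (\<forall>j\<in>P. e j = a j) \<longrightarrow> score n w0 v e > 0)
        \<and> (\<Sum>i=1..n. \<delta> i * (if i \<in> P then 1 else 0)) > Ph
        \<and> (\<forall>p :: nat \<Rightarrow> real. (\<forall>i\<in>{1..n}. p i \<in> {0, 1})
              \<and> (\<Sum>i=1..n. \<delta> i * p i) > Ph
              \<longrightarrow> (\<Sum>i=1..n. (if i \<in> P then 1 else 0)) \<le> (\<Sum>i=1..n. p i))
        \<and> PI_explanation n d w0 v a P
        \<and> (\<forall>Q. PI_explanation n d w0 v a Q \<longrightarrow> card P \<le> card Q))"
    unfolding Let_def using kn Sk Skm uniq suff' c1 c2 PI mincard by (intro conjI)
  then show ?thesis unfolding S_def Ph_def \<delta>_def P_def by blast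
qed

end
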